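(* There exist a compact set $\mathcal A\subseteq\mathbb R^2$ with $\lambda^2(\mathcal A)=1/4$ and a $C^\infty$-function $\kappa\colon\mathbb R^2\to\mathbb R$ that is one-to-one on $\mathcal A$.
   Context: $\lambda^2$ denotes Lebesgue measure on $\mathbb R^2$. *)

theory Defs
  imports "HOL-Analysis.Analysis"
begin

fun iter_deriv :: "('a::real_normed_vector \<Rightarrow> real) \<Rightarrow> 'a list \<Rightarrow> 'a \<Rightarrow> real" where
  "iter_deriv f [] = f"
| "iter_deriv f (v # vs) = (\<lambda>x. frechet_derivative (iter_deriv f vs) (at x) v)"

definition smooth :: "('a::real_normed_vector \<Rightarrow> real) \<Rightarrow> bool" where
  "smooth f \<longleftrightarrow> (\<forall>vs x. iter_deriv f vs differentiable (at x))"

end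

theory Submission
  imports Defs "HOL-Computational_Algebra.Polynomial"
begin

fun Ck :: "nat \<Rightarrow> (real \<Rightarrow> real) \<Rightarrow> bool" where
  "Ck 0 f = True"
| "Ck (Suc k) f = ((\<forall>x. f field_differentiable at x) \<and> Ck k (deriv f))"

lemma Ck_mono: "Ck (Suc k) f \<Longrightarrow> Ck k f"
  by (induction k arbitrary: f) auto

lemma Ck_diff: "Ck (Suc k) f \<Longrightarrow> f field_differentiable at x"
  by simp

lemma Ck_const: "Ck k (\<lambda>x. c)"
  by (induction k arbitrary: c) (auto simp: field_differentiable_const)

lemma Ck_id: "Ck k (\<lambda>x. x)"
  by (cases k) (auto simp: field_differentiable_ident Ck_const)

lemma Ck_add: "Ck k f \<Longrightarrow> Ck k g \<Longrightarrow> Ck k (\<lambda>x. f x + g x)"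
proof (induction k arbitrary: f g)
  case (Suc k)
  have e: "deriv (\<lambda>x. f x + g x) = (\<lambda>x. deriv f x + deriv g x)"
    using Suc.prems by (intro ext deriv_add) auto
  show ?case using Suc by (auto simp: e intro: field_differentiable_add)
qed simp


lemma Ck_mult: "Ck k f \<Longrightarrow> Ck k g \<Longrightarrow> Ck k (\<lambda>x. f x * g x)"
proof (induction k arbitrary: f g)
  case (Suc k)
  have e: "deriv (\<lambda>x. f x * g x) = (\<lambda>x. f x * deriv g x + deriv f x * g x)"
    using Suc.prems by (intro ext deriv_mult) auto
  have f: "Ck k f" "Ck k g" using Ck_mono[OF Suc.prems(1)] Ck_mono[OF Suc.prems(2)] by auto
  have a: "Ck k (\<lambda>x. f x * deriv g x)" using Suc.prems f by (intro Suc.IH) auto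
  have b: "Ck k (\<lambda>x. deriv f x * g x)" using Suc.prems f by (intro Suc.IH) auto
  have "Ck k (\<lambda>x. f x * deriv g x + deriv f x * g x)"
    by (rule Ck_add[OF a b])
  moreover have "(\<lambda>x. f x * g x) field_differentiable at x" for x
    using Suc.prems by (auto intro: field_differentiable_mult)
  ultimately show ?case by (simp add: e)
qed simp


lemma Ck_comp: "Ck k f \<Longrightarrow> Ck k g \<Longrightarrow> Ck k (\<lambda>x. f (g x))"
proof (induction k arbitrary: f g)
  case (Suc k)
  have e: "deriv (\<lambda>x. f (g x)) = (\<lambda>x. deriv f (g x) * deriv g x)"
  proof
    fix x
    have "deriv (f \<circ> g) x = deriv f (g x) * deriv g x"
      using Suc.prems by (intro deriv_chain) auto
    then show "deriv (\<lambda>x. f (g x)) x = deriv f (g x) * deriv g x" by (simp add: o_def)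
  qed
  have g: "Ck k g" using Ck_mono[OF Suc.prems(2)] .
  have df: "Ck k (deriv f)" "Ck k (deriv g)" using Suc.prems by auto
  have a: "Ck k (\<lambda>x. deriv f (g x))" by (rule Suc.IH[OF df(1) g])
  have "Ck k (\<lambda>x. deriv f (g x) * deriv g x)" by (rule Ck_mult[OF a df(2)])
  moreover have "(\<lambda>x. f (g x)) field_differentiable at x" for x
  proof -
    have "(f \<circ> g) field_differentiable at x"
      using Suc.prems by (intro field_differentiable_compose) auto
    then show ?thesis by (simp add: o_def)
  qed
  ultimately show ?case by (simp add: e)
qed simp

lemma Ck_inverse: "Ck k u \<Longrightarrow> (\<And>x. u x \<noteq> 0) \<Longrightarrow> Ck k (\<lambda>x. inverse (u x))"
proof (induction k arbitrary: u)
  case (Suc k)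
  have e: "deriv (\<lambda>x. inverse (u x)) = (\<lambda>x. - 1 * deriv u x * (inverse (u x) * inverse (u x)))"
  proof
    fix x
    have "deriv (\<lambda>x. inverse (u x)) x = - deriv u x / u x ^ 2"
      using Suc.prems by (intro deriv_inverse) auto
    then show "deriv (\<lambda>x. inverse (u x)) x = - 1 * deriv u x * (inverse (u x) * inverse (u x))"
      using Suc.prems(2)[of x] by (simp add: power2_eq_square divide_inverse)
  qed
  have u: "Ck k u" using Ck_mono[OF Suc.prems(1)] .
  have du: "Ck k (deriv u)" using Suc.prems by auto
  have i: "Ck k (\<lambda>x. inverse (u x))" using Suc.IH[OF u] Suc.prems(2) by blast
  have "Ck k (\<lambda>x. - 1 * deriv u x * (inverse (u x) * inverse (u x)))"
    by (intro Ck_mult[OF Ck_mult[OF Ck_const du] Ck_mult[OF i i]])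
  moreover have "(\<lambda>x. inverse (u x)) field_differentiable at x" for x
    using Suc.prems by (auto intro!: field_differentiable_inverse)
  ultimately show ?case by (simp add: e)
qed simp


lemma Ck_sin_cos: "Ck k sin \<and> Ck k cos"
proof (induction k)
  case (Suc k)
  have ds: "deriv sin = cos" and dc: "deriv cos = (\<lambda>x. - 1 * sin x)"
    by (auto intro!: ext DERIV_imp_deriv derivative_eq_intros)
  have "Ck k (\<lambda>x. - 1 * sin x)" using Suc by (intro Ck_mult[OF Ck_const]) auto
  then have "Ck k (deriv sin)" "Ck k (deriv cos)" using Suc by (simp_all only: ds dc)
  then show ?case
    by (auto simp: field_differentiable_within_sin field_differentiable_within_cos)
qed simp

lemma funpow_deriv_Suc: "(deriv ^^ Suc j) f = (deriv ^^ j) (deriv f)"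
  by (metis comp_apply funpow_Suc_right)

lemma Ck_deriv_pow: "Ck (Suc (j + k)) f \<Longrightarrow> Ck (Suc k) ((deriv ^^ j) f)"
proof (induction j arbitrary: f)
  case 0 then show ?case by simp
next
  case (Suc j)
  have "Ck (Suc (j + k)) (deriv f)" using Suc.prems by simp
  then have "Ck (Suc k) ((deriv ^^ j) (deriv f))" by (rule Suc.IH)
  then show ?case by (simp only: funpow_deriv_Suc)
qed

lemma Ck_from_pow: "(\<And>j x. (deriv ^^ j) f field_differentiable at x) \<Longrightarrow> Ck k f"
proof (induction k arbitrary: f)
  case (Suc k)
  have "(deriv ^^ j) (deriv f) field_differentiable at x" for j x
    using Suc.prems[of "Suc j" x] by (simp only: funpow_deriv_Suc)
  then have "Ck k (deriv f)" by (rule Suc.IH)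
  moreover have "f field_differentiable at x" for x using Suc.prems[of 0 x] by simp
  ultimately show ?case by simp
qed simp

definition smooth1 :: "(real \<Rightarrow> real) \<Rightarrow> bool" where
  "smooth1 f \<longleftrightarrow> (\<forall>k. Ck k f)"

lemma smooth1_diff: "smooth1 f \<Longrightarrow> (deriv ^^ j) f field_differentiable at x"
proof -
  assume "smooth1 f"
  then have "Ck (Suc (j + 0)) f" unfolding smooth1_def by blast
  then have "Ck (Suc 0) ((deriv ^^ j) f)" by (rule Ck_deriv_pow)
  then show ?thesis by (rule Ck_diff)
qed


lemma poly_exp_lim: "((\<lambda>t. poly P t * exp (-t)) \<longlongrightarrow> (0::real)) at_top"
proof -
  have "((\<lambda>t. \<Sum>i\<le>degree P. coeff P i * (t ^ i / exp t)) \<longlongrightarrow> (\<Sum>i\<le>degree P. coeff P i * 0)) at_top"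
    by (intro tendsto_sum tendsto_mult tendsto_const tendsto_power_div_exp_0)
  moreover have "poly P t * exp (-t) = (\<Sum>i\<le>degree P. coeff P i * (t ^ i / exp t))" for t
    by (simp add: poly_altdef exp_minus divide_inverse sum_distrib_right mult.assoc)
  ultimately show ?thesis by simp
qed

definition fl :: "real \<Rightarrow> real" where "fl x = (if x > 0 then exp (- 1 / x) else 0)"

definition gP :: "real poly \<Rightarrow> real \<Rightarrow> real" where
  "gP P x = (if x > 0 then poly P (1 / x) * exp (- 1 / x) else 0)"

definition stepP :: "real poly \<Rightarrow> real poly" where
  "stepP P = [:0, 0, 1:] * (P - pderiv P)"

lemma gP_deriv: "(gP P has_real_derivative gP (stepP P) x) (at x)"
proof (cases "x > 0")
  case True
  have d: "((\<lambda>x. poly P (1 / x) * exp (- 1 / x)) has_real_derivative gP (stepP P) x) (at x)"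
  proof -
    have "((\<lambda>x. poly P (1 / x) * exp (- 1 / x)) has_real_derivative
       (poly (pderiv P) (1/x) * (- 1 / x^2)) * exp (-1/x) + poly P (1/x) * (exp (-1/x) * (1 / x^2))) (at x)"
      using True
      by (auto intro!: derivative_eq_intros DERIV_chain2[OF poly_DERIV] simp: power2_eq_square field_simps)
    moreover have "(poly (pderiv P) (1/x) * (- 1 / x^2)) * exp (-1/x) + poly P (1/x) * (exp (-1/x) * (1 / x^2))
       = gP (stepP P) x"
      using True by (simp add: gP_def stepP_def field_simps power2_eq_square)
    ultimately show ?thesis by simp
  qed
  show ?thesis
    apply (rule has_field_derivative_transform_within_open[OF d, of "{0<..}"])
    using True by (auto simp: gP_def)
next
  case False
  show ?thesis
  proof (cases "x < 0")
    case True
    have d: "((\<lambda>x. 0) has_real_derivative gP (stepP P) x) (at x)"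
      using True by (simp add: gP_def)
    show ?thesis
      apply (rule has_field_derivative_transform_within_open[OF d, of "{..<0}"])
      using True by (auto simp: gP_def)
  next
    case False
    with \<open>\<not> x > 0\<close> have x0: "x = 0" by simp
    have "((\<lambda>y. (gP P y - gP P 0) / (y - 0)) \<longlongrightarrow> 0) (at 0)"
    proof (rule filterlim_split_at)
      show "((\<lambda>y. (gP P y - gP P 0) / (y - 0)) \<longlongrightarrow> 0) (at_left 0)"
        by (rule tendsto_eventually) (auto simp: gP_def eventually_at_left_field intro: exI[of _ "-1"])
      have "((\<lambda>t. poly (pCons 0 P) t * exp (-t)) \<longlongrightarrow> 0) at_top" by (rule poly_exp_lim)
      then have "((\<lambda>y. (gP P (inverse y) - gP P 0) / (inverse y - 0)) \<longlongrightarrow> 0) at_top"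
        apply (rule Lim_transform_eventually)
        apply (rule eventually_mono[OF eventually_gt_at_top[of 0]])
        by (simp add: gP_def field_simps)
      then show "((\<lambda>y. (gP P y - gP P 0) / (y - 0)) \<longlongrightarrow> 0) (at_right 0)"
        by (simp add: filterlim_at_right_to_top)
    qed
    then show ?thesis using x0
      by (simp add: has_field_derivative_iff gP_def)
  qed
qed


lemma gP_Ck: "Ck k (gP P)"
proof (induction k arbitrary: P)
  case (Suc k)
  have "deriv (gP P) = gP (stepP P)"
    by (intro ext DERIV_imp_deriv gP_deriv)
  moreover have "gP P field_differentiable at x" for x
    using gP_deriv field_differentiable_def by blast
  ultimately show ?case using Suc by simp
qed simp

lemma fl_gP: "fl = gP 1"
  by (auto simp: fl_def gP_def)

lemma fl_Ck: "Ck k fl"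
  by (simp add: fl_gP gP_Ck)

lemma Ck_lin: "Ck k (\<lambda>x. a * x + b)"
  by (rule Ck_add[OF Ck_mult[OF Ck_const Ck_id] Ck_const])

definition H :: "real \<Rightarrow> real" where
  "H y = fl (1 - y) * inverse (fl (1 - y) + fl (1 + y))"

lemma fl_pos: "x > 0 \<Longrightarrow> fl x > 0" and fl_zero: "x \<le> 0 \<Longrightarrow> fl x = 0" and fl_nonneg: "fl x \<ge> 0"
  by (auto simp: fl_def)

lemma H_Ck: "Ck k H"
proof -
  have a: "Ck k (\<lambda>y. fl ((- 1) * y + 1))" "Ck k (\<lambda>y. fl (1 * y + 1))"
    by (rule Ck_comp[OF fl_Ck Ck_lin])+
  have ne: "fl (1 - y) + fl (1 + y) \<noteq> 0" for y
  proof (cases "y < 1")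
    case True then show ?thesis using fl_pos[of "1 - y"] fl_nonneg[of "1 + y"] by auto
  next
    case False then show ?thesis using fl_pos[of "1 + y"] fl_nonneg[of "1 - y"] by auto
  qed
  have "Ck k (\<lambda>y. fl ((- 1) * y + 1) * inverse (fl ((- 1) * y + 1) + fl (1 * y + 1)))"
    using ne by (intro Ck_mult[OF a(1)] Ck_inverse Ck_add[OF a]) (auto simp: add.commute)
  moreover have "(\<lambda>y. fl ((- 1) * y + 1) * inverse (fl ((- 1) * y + 1) + fl (1 * y + 1))) = H"
    by (auto simp: H_def add.commute)
  ultimately show ?thesis by simp
qed

lemma H_one: "y \<le> -1 \<Longrightarrow> H y = 1"
  using fl_pos[of "1 - y"] fl_zero[of "1 + y"] by (simp add: H_def)

lemma H_zero: "y \<ge> 1 \<Longrightarrow> H y = 0"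
  using fl_zero[of "1 - y"] by (simp add: H_def)

lemma smooth1_Ck: "smooth1 f \<Longrightarrow> Ck k f"
  by (simp add: smooth1_def)


lemma series_smooth:
  fixes u :: "nat \<Rightarrow> real \<Rightarrow> real" and w :: "nat \<Rightarrow> real"
  assumes sm: "\<And>n. smooth1 (u n)"
  and bd: "\<And>k R. \<exists>N. \<forall>n\<ge>N. \<forall>x. \<bar>x\<bar> \<le> R \<longrightarrow> \<bar>w n * (deriv ^^ k) (u n) x\<bar> \<le> (1/2) ^ n"
  shows "smooth1 (\<lambda>x. \<Sum>n. w n * u n x)"
proof -
  define G where "G k x = (\<Sum>n. w n * (deriv ^^ k) (u n) x)" for k x
  have D: "(G k has_field_derivative G (Suc k) x) (at x)" for k x
  proof -
    have dd: "((\<lambda>y. w n * (deriv ^^ k) (u n) y) has_field_derivative w n * (deriv ^^ Suc k) (u n) y) (at y within ball x 1)" for n y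
    proof -
      have "((deriv ^^ k) (u n) has_field_derivative deriv ((deriv ^^ k) (u n)) y) (at y)"
        using smooth1_diff[OF sm] DERIV_deriv_iff_field_differentiable by blast
      then have "((\<lambda>y. w n * (deriv ^^ k) (u n) y) has_field_derivative w n * deriv ((deriv ^^ k) (u n)) y) (at y)"
        by (rule DERIV_cmult)
      moreover have "(deriv ^^ Suc k) (u n) y = deriv ((deriv ^^ k) (u n)) y" by simp
      ultimately show ?thesis by (metis has_field_derivative_at_within)
    qed
    have uc: "uniformly_convergent_on (ball x 1) (\<lambda>n y. \<Sum>i<n. w i * (deriv ^^ Suc k) (u i) y)"
    proof (rule Weierstrass_m_test'_ev[where f = "\<lambda>i y. w i * (deriv ^^ Suc k) (u i) y" and M = "\<lambda>n. (1/2) ^ n" and A = "ball x 1"])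
      obtain N where N: "\<forall>n\<ge>N. \<forall>y. \<bar>y\<bar> \<le> \<bar>x\<bar> + 1 \<longrightarrow> \<bar>w n * (deriv ^^ Suc k) (u n) y\<bar> \<le> (1/2) ^ n"
        using bd by blast
      show "\<forall>\<^sub>F n in sequentially. \<forall>y\<in>ball x 1. norm (w n * (deriv ^^ Suc k) (u n) y) \<le> (1/2) ^ n"
        unfolding eventually_sequentially
      proof (intro exI[of _ N] allI impI ballI)
        fix n y assume "N \<le> n" "y \<in> ball x 1"
        then show "norm (w n * (deriv ^^ Suc k) (u n) y) \<le> (1/2) ^ n"
          using N by (auto simp: dist_real_def)
      qed
    qed (simp add: summable_geometric)
    have sx: "summable (\<lambda>n. w n * (deriv ^^ k) (u n) x)"
    proof (rule summable_comparison_test_ev[where f = "\<lambda>n. w n * (deriv ^^ k) (u n) x" and g = "\<lambda>n. (1/2::real) ^ n"])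
      obtain N where N: "\<forall>n\<ge>N. \<forall>y. \<bar>y\<bar> \<le> \<bar>x\<bar> \<longrightarrow> \<bar>w n * (deriv ^^ k) (u n) y\<bar> \<le> (1/2) ^ n"
        using bd by blast
      show "\<forall>\<^sub>F n in sequentially. norm (w n * (deriv ^^ k) (u n) x) \<le> (1/2) ^ n"
        unfolding eventually_sequentially using N by auto
    qed (simp add: summable_geometric)
    have "((\<lambda>y. \<Sum>n. w n * (deriv ^^ k) (u n) y) has_field_derivative (\<Sum>n. w n * (deriv ^^ Suc k) (u n) x)) (at x)"
      by (rule has_field_derivative_series'(2)[OF convex_ball dd uc _ sx]) auto
    then show ?thesis unfolding G_def .
  qed
  have eq: "(deriv ^^ k) (\<lambda>x. \<Sum>n. w n * u n x) = G k" for k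
  proof (induction k)
    case 0 then show ?case by (simp add: G_def)
  next
    case (Suc k)
    have "deriv (G k) = G (Suc k)" by (rule ext, rule DERIV_imp_deriv, rule D)
    then show ?case using Suc.IH by simp
  qed
  have "(deriv ^^ j) (\<lambda>x. \<Sum>n. w n * u n x) field_differentiable at x" for j x
    unfolding eq field_differentiable_def using D by blast
  then show ?thesis unfolding smooth1_def by (blast intro: Ck_from_pow)
qed


definition rr :: "nat \<Rightarrow> real" where "rr n = (1/2) ^ (n + 7)"
definition sg :: "nat \<Rightarrow> real" where "sg n = sin (2 * pi * rr n)"
definition chi :: "nat \<Rightarrow> real \<Rightarrow> real" where "chi n x = H (sin (2 * pi * (2 ^ n * x)) / sg n)"
definition dig :: "nat \<Rightarrow> real \<Rightarrow> int" where "dig n x = \<lfloor>2 ^ (n + 1) * x\<rfloor> - 2 * \<lfloor>2 ^ n * x\<rfloor>"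
definition good :: "real \<Rightarrow> bool" where
  "good x \<longleftrightarrow> 0 \<le> x \<and> x \<le> 1 \<and>
     (\<forall>n. \<forall>k::int. 0 \<le> k \<and> real_of_int k \<le> 2 ^ (n + 1) \<longrightarrow> rr n / 2 ^ n \<le> \<bar>x - real_of_int k / 2 ^ (n + 1)\<bar>)"

lemma sin_lower:
  assumes "0 \<le> a" "a \<le> pi / 2" "a \<le> b" "b \<le> pi - a"
  shows "sin a \<le> sin b"
proof (cases "b \<le> pi / 2")
  case True
  then show ?thesis using assms by (intro sin_monotone_2pi_le) auto
next
  case False
  have "sin a \<le> sin (pi - b)" using assms False by (intro sin_monotone_2pi_le) auto
  then show ?thesis by simp
qed

lemma rr_pos: "0 < rr n" and rr_le: "rr n \<le> 1 / 128"
proof -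
  show "0 < rr n" by (simp add: rr_def)
  have "(1/2::real) ^ (n + 7) \<le> (1/2) ^ 7" by (rule power_decreasing) auto
  moreover have "(1/2::real) ^ 7 = 1 / 128" by (simp add: power_divide)
  ultimately show "rr n \<le> 1 / 128" unfolding rr_def by linarith
qed

lemma sg_pos: "0 < sg n"
proof -
  have "2 * pi * rr n < pi" using rr_le[of n] pi_gt_zero by (simp add: field_simps)
  then show ?thesis unfolding sg_def using rr_pos[of n] by (intro sin_gt_zero) auto
qed

lemma good_scaled:
  fixes k :: int
  assumes "good x" "0 \<le> k" "real_of_int k \<le> 2 ^ (n + 1)"
  shows "rr n \<le> \<bar>2 ^ n * x - real_of_int k / 2\<bar>"
proof -
  have "rr n / 2 ^ n \<le> \<bar>x - real_of_int k / 2 ^ (n + 1)\<bar>" using assms unfolding good_def by blast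
  then have "2 ^ n * (rr n / 2 ^ n) \<le> 2 ^ n * \<bar>x - real_of_int k / 2 ^ (n + 1)\<bar>"
    by (intro mult_left_mono) auto
  also have "2 ^ n * \<bar>x - real_of_int k / 2 ^ (n + 1)\<bar> = \<bar>2 ^ n * x - real_of_int k / 2\<bar>"
    by (simp add: abs_mult[symmetric] field_simps)
  finally show ?thesis by simp
qed

lemma sin_shift_int: "sin (2 * pi * (of_int m + s)) = sin (2 * pi * s)"
proof -
  have "sin (2 * pi * (of_int m + s)) = sin (2 * pi * s + (2 * pi) * of_int m)"
    by (simp add: algebra_simps)
  also have "\<dots> = sin (2 * pi * s)" by (simp add: sin_add)
  finally show ?thesis .
qed

lemma good_digit:
  assumes "good x"
  shows "(chi n x = 0 \<and> dig n x = 0) \<or> (chi n x = 1 \<and> dig n x = 1)"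
proof -
  define t where "t = 2 ^ n * x"
  define m where "m = \<lfloor>t\<rfloor>"
  define s where "s = t - m"
  have x01: "0 \<le> x" "x \<le> 1" using assms by (auto simp: good_def)
  have t0: "0 \<le> t" and t1: "t \<le> 2 ^ n" using x01 by (auto simp: t_def)
  have m0: "0 \<le> m" using t0 by (simp add: m_def)
  have s01: "0 \<le> s" "s < 1" unfolding s_def m_def by linarith+
  have tm: "t = m + s" by (simp add: s_def)
  have mle: "real_of_int m \<le> 2 ^ n" using t1 s01 tm by linarith
  have "rr n \<le> \<bar>t - of_int (2 * m) / 2\<bar>"
    unfolding t_def by (rule good_scaled[OF assms]) (use m0 mle in \<open>auto\<close>)
  then have h0: "rr n \<le> s" using s01 by (simp add: tm)
  have "s > 0" using h0 rr_pos[of n] by linarith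
  then have "real_of_int m < 2 ^ n" using tm t1 by linarith
  then have "m < 2 ^ n" by (metis of_int_less_iff of_int_numeral of_int_power)
  then have m1: "m + 1 \<le> 2 ^ n" by simp
  have m1r: "real_of_int (2 * m + 2) \<le> 2 ^ (n + 1)"
  proof -
    have "2 * m + 2 \<le> 2 ^ (n + 1)" using m1 by simp
    then show ?thesis by (metis of_int_le_iff of_int_numeral of_int_power)
  qed
  have "rr n \<le> \<bar>t - of_int (2 * m + 1) / 2\<bar>"
    unfolding t_def by (rule good_scaled[OF assms]) (use m0 m1r in \<open>auto\<close>)
  then have h1: "rr n \<le> \<bar>s - 1/2\<bar>" by (simp add: tm field_simps)
  have "rr n \<le> \<bar>t - of_int (2 * m + 2) / 2\<bar>"
    unfolding t_def by (rule good_scaled[OF assms]) (use m0 m1r in \<open>auto\<close>)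
  then have h2: "rr n \<le> \<bar>s - 1\<bar>" by (simp add: tm field_simps)
  have sineq: "sin (2 * pi * (2 ^ n * x)) = sin (2 * pi * s)"
    using sin_shift_int[of m s] by (simp add: t_def[symmetric] tm)
  have dg: "dig n x = \<lfloor>2 * s\<rfloor>"
  proof -
    have "2 ^ (n + 1) * x = 2 * t" by (simp add: t_def)
    also have "\<dots> = 2 * s + of_int (2 * m)" by (simp add: tm)
    finally have "\<lfloor>2 ^ (n + 1) * x\<rfloor> = \<lfloor>2 * s + of_int (2 * m)\<rfloor>" by (rule arg_cong)
    also have "\<dots> = \<lfloor>2 * s\<rfloor> + 2 * m" by (rule floor_add_int[symmetric])
    finally have "\<lfloor>2 ^ (n + 1) * x\<rfloor> = \<lfloor>2 * s\<rfloor> + 2 * m" .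
    then show ?thesis by (simp add: dig_def t_def[symmetric] m_def)
  qed
  have pr: "2 * pi * rr n \<le> pi / 2" using rr_le[of n] pi_gt_zero by (simp add: field_simps)
  show ?thesis
  proof (cases "s < 1/2")
    case True
    have sle: "s \<le> 1/2 - rr n" using h1 True by linarith
    have b1: "2 * pi * rr n \<le> 2 * pi * s" using h0 by (intro mult_left_mono) auto
    have "pi * (2 * s + 2 * rr n) \<le> pi * 1" using sle by (intro mult_left_mono) auto
    then have b2: "2 * pi * s \<le> pi - 2 * pi * rr n" by (simp add: algebra_simps)
    have "sg n \<le> sin (2 * pi * s)" unfolding sg_def
      using rr_pos[of n] pr b1 b2 by (intro sin_lower) auto
    then have "1 \<le> sin (2 * pi * (2 ^ n * x)) / sg n" using sg_pos[of n] sineq by simp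
    then have "chi n x = 0" unfolding chi_def by (rule H_zero)
    moreover have "dig n x = 0" unfolding dg using True s01 by linarith
    ultimately show ?thesis by simp
  next
    case False
    have sge: "1/2 + rr n \<le> s" using h1 False by linarith
    have sle: "s \<le> 1 - rr n" using h2 s01 by linarith
    have "pi * (1 + 2 * rr n) \<le> pi * (2 * s)" using sge by (intro mult_left_mono) auto
    then have b1: "2 * pi * rr n \<le> 2 * pi * s - pi" by (simp add: algebra_simps)
    have "pi * (2 * s + 2 * rr n) \<le> pi * 2" using sle by (intro mult_left_mono) auto
    then have b2: "2 * pi * s - pi \<le> pi - 2 * pi * rr n" by (simp add: algebra_simps)
    have "sg n \<le> sin (2 * pi * s - pi)" unfolding sg_def
      using rr_pos[of n] pr b1 b2 by (intro sin_lower) auto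
    then have "sin (2 * pi * (2 ^ n * x)) \<le> - sg n" using sineq by simp
    then have "sin (2 * pi * (2 ^ n * x)) / sg n \<le> -1" using sg_pos[of n] by (simp add: field_simps)
    then have "chi n x = 1" unfolding chi_def by (rule H_one)
    moreover have "dig n x = 1" unfolding dg using False s01 by linarith
    ultimately show ?thesis by simp
  qed
qed


lemma good_01: "good x \<Longrightarrow> 0 < x \<and> x < 1"
proof -
  assume g: "good x"
  have a: "rr 0 \<le> \<bar>2 ^ 0 * x - real_of_int 0 / 2\<bar>" by (rule good_scaled[OF g]) auto
  have b: "rr 0 \<le> \<bar>2 ^ 0 * x - real_of_int 2 / 2\<bar>" by (rule good_scaled[OF g]) auto
  have "0 \<le> x" "x \<le> 1" using g by (auto simp: good_def)
  then show ?thesis using a b rr_pos[of 0] by auto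
qed

lemma good_inj:
  assumes gx: "good x" and gy: "good y" and d: "\<And>n. dig n x = dig n y"
  shows "x = y"
proof (rule ccontr)
  assume ne: "x \<noteq> y"
  have fl: "\<lfloor>2 ^ n * x\<rfloor> = \<lfloor>2 ^ n * y\<rfloor>" for n
  proof (induction n)
    case 0
    have "\<lfloor>x\<rfloor> = 0" "\<lfloor>y\<rfloor> = 0" using good_01[OF gx] good_01[OF gy] by (auto intro: floor_unique)
    then show ?case by simp
  next
    case (Suc n)
    have "\<lfloor>2 ^ Suc n * x\<rfloor> = dig n x + 2 * \<lfloor>2 ^ n * x\<rfloor>" by (simp add: dig_def)
    also have "\<dots> = dig n y + 2 * \<lfloor>2 ^ n * y\<rfloor>" using d Suc.IH by simp
    also have "\<dots> = \<lfloor>2 ^ Suc n * y\<rfloor>" by (simp add: dig_def)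
    finally show ?case .
  qed
  have lt: "\<bar>2 ^ n * x - 2 ^ n * y\<bar> < 1" for n
    using fl[of n] by linarith
  have "\<bar>x - y\<bar> > 0" using ne by simp
  then obtain n where n: "(1/2::real) ^ n < \<bar>x - y\<bar>" using real_arch_pow_inv[of "\<bar>x - y\<bar>" "1/2"] by auto
  have "\<bar>2 ^ n * (x - y)\<bar> = 2 ^ n * \<bar>x - y\<bar>" by (simp add: abs_mult)
  then have "2 ^ n * \<bar>x - y\<bar> < 1" using lt[of n] by (simp add: right_diff_distrib)
  then have "\<bar>x - y\<bar> < 1 / 2 ^ n" by (simp add: field_simps)
  with n show False by (simp add: power_one_over)
qed

lemma abs_mult_le1: "0 < (a::real) \<Longrightarrow> \<bar>b\<bar> \<le> 1 \<Longrightarrow> \<bar>a * b\<bar> \<le> a"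
  by (simp add: abs_mult abs_of_pos mult_left_le)

lemma superdec:
  fixes e c c' :: "nat \<Rightarrow> real"
  assumes pos: "\<And>m. 0 < e m" and dec: "\<And>m. e (Suc m) \<le> e m / 4"
    and c: "\<And>m. c m \<in> {0,1}" and c': "\<And>m. c' m \<in> {0,1}"
    and eq: "(\<Sum>m. e m * c m) = (\<Sum>m. e m * c' m)"
  shows "c = c'"
proof (rule ccontr)
  assume ne: "c \<noteq> c'"
  have geo: "e (m + j) \<le> e m * (1/4) ^ j" for m j
  proof (induction j)
    case (Suc j)
    have "e (m + Suc j) \<le> e (m + j) / 4" using dec[of "m + j"] by simp
    also have "\<dots> \<le> e m * (1/4) ^ j / 4" using Suc.IH by simp
    finally show ?case by simp
  qed simp
  have se: "summable e"
    by (rule summable_comparison_test[where g = "\<lambda>m. e 0 * (1/4) ^ m"])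
       (use geo[of 0] pos in \<open>auto intro!: summable_mult summable_geometric simp: less_imp_le\<close>)
  have sb: "summable (\<lambda>m. e m * b m)" if "\<And>m. \<bar>b m\<bar> \<le> 1" for b
    by (rule summable_comparison_test[OF _ se]) (use that pos abs_mult_le1 in \<open>auto\<close>)
  define d where "d m = c m - c' m" for m
  have db: "\<bar>d m\<bar> \<le> 1" for m using c[of m] c'[of m] by (auto simp: d_def)
  have s1: "summable (\<lambda>m. e m * c m)" "summable (\<lambda>m. e m * c' m)"
    using c c' by (auto intro!: sb) (metis abs_0 abs_1 empty_iff insert_iff order_refl zero_le_one)+
  have sd: "(\<Sum>m. e m * d m) = 0"
    using suminf_diff[OF s1] eq by (simp add: d_def right_diff_distrib)
  have "\<exists>m. d m \<noteq> 0" using ne by (auto simp: d_def fun_eq_iff)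
  define M where "M = (LEAST m. d m \<noteq> 0)"
  have dM: "d M \<noteq> 0" unfolding M_def using \<open>\<exists>m. d m \<noteq> 0\<close> by (rule LeastI_ex)
  have before: "d i = 0" if "i < M" for i using not_less_Least[OF that[unfolded M_def]] by simp
  have adM: "\<bar>d M\<bar> = 1" using c[of M] c'[of M] dM by (auto simp: d_def)
  have sed: "summable (\<lambda>m. e m * d m)" by (rule sb[OF db])
  have split: "(\<Sum>m. e m * d m) = (\<Sum>n. e (n + Suc M) * d (n + Suc M)) + (\<Sum>i<Suc M. e i * d i)"
    by (rule suminf_split_initial_segment[OF sed])
  have fin: "(\<Sum>i<Suc M. e i * d i) = e M * d M" using before by simp
  have sabs: "summable (\<lambda>n. \<bar>e (n + Suc M) * d (n + Suc M)\<bar>)"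
    by (rule summable_comparison_test[OF _ summable_ignore_initial_segment[OF se, of "Suc M"]])
       (use db pos abs_mult_le1 in \<open>auto\<close>)
  have "\<bar>\<Sum>n. e (n + Suc M) * d (n + Suc M)\<bar> \<le> (\<Sum>n. \<bar>e (n + Suc M) * d (n + Suc M)\<bar>)"
    by (rule summable_rabs[OF sabs])
  also have "\<dots> \<le> (\<Sum>n. e M * (1/4) * (1/4) ^ n)"
  proof (rule suminf_le[OF _ sabs])
    show "summable (\<lambda>n. e M * (1/4) * (1/4::real) ^ n)" by (intro summable_mult summable_geometric) simp
    fix n
    have "\<bar>e (n + Suc M) * d (n + Suc M)\<bar> \<le> e (n + Suc M)"
      using db[of "n + Suc M"] pos[of "n + Suc M"] abs_mult_le1 by blast
    also have "\<dots> = e (M + Suc n)" by (simp add: add.commute)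
    also have "\<dots> \<le> e M * (1/4) ^ Suc n" by (rule geo)
    finally show "\<bar>e (n + Suc M) * d (n + Suc M)\<bar> \<le> e M * (1/4) * (1/4) ^ n" by simp
  qed
  also have "\<dots> = e M * (1/4) * (4/3)"
    by (subst suminf_mult) (auto simp: suminf_geometric)
  finally have tail: "\<bar>\<Sum>n. e (n + Suc M) * d (n + Suc M)\<bar> \<le> e M / 3" by simp
  have "e M * d M = - (\<Sum>n. e (n + Suc M) * d (n + Suc M))" using split fin sd by simp
  then have "\<bar>e M * d M\<bar> \<le> e M / 3" using tail by simp
  then have "e M \<le> e M / 3" using adM pos[of M] by (simp add: abs_mult)
  then show False using pos[of M] by simp
qed


lemma chi_smooth: "smooth1 (chi n)"
  unfolding smooth1_def
proof
  fix k
  have "Ck k (\<lambda>x. H (sin ((2 * pi * 2 ^ n) * x + 0) * inverse (sg n)))"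
    by (rule Ck_comp[OF H_Ck Ck_mult[OF Ck_comp[OF conjunct1[OF Ck_sin_cos] Ck_lin] Ck_const]])
  moreover have "(\<lambda>x. H (sin ((2 * pi * 2 ^ n) * x + 0) * inverse (sg n))) = chi n"
    by (auto simp: chi_def divide_inverse mult.assoc)
  ultimately show "Ck k (chi n)" by simp
qed

lemma chi_bound_ex: "\<exists>b. 0 \<le> b \<and> (\<forall>x. \<bar>x\<bar> \<le> real n \<longrightarrow> \<bar>(deriv ^^ k) (chi n) x\<bar> \<le> b)"
proof -
  have "continuous_on (cball 0 (real n)) ((deriv ^^ k) (chi n))"
    by (intro continuous_at_imp_continuous_on ballI field_differentiable_imp_continuous_at smooth1_diff chi_smooth)
  then have "compact ((deriv ^^ k) (chi n) ` cball 0 (real n))"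
    by (intro compact_continuous_image) auto
  then have "bounded ((deriv ^^ k) (chi n) ` cball 0 (real n))" by (rule compact_imp_bounded)
  then obtain a where a: "\<forall>y\<in>(deriv ^^ k) (chi n) ` cball 0 (real n). \<bar>y\<bar> \<le> a"
    unfolding bounded_real by blast
  show ?thesis
  proof (rule exI[of _ "max a 0"], intro conjI allI impI)
    show "0 \<le> max a 0" by simp
    fix x :: real assume "\<bar>x\<bar> \<le> real n"
    then have "x \<in> cball 0 (real n)" by simp
    then have "\<bar>(deriv ^^ k) (chi n) x\<bar> \<le> a" using a by blast
    then show "\<bar>(deriv ^^ k) (chi n) x\<bar> \<le> max a 0" by (simp add: le_max_iff_disj)
  qed
qed

definition BB :: "nat \<Rightarrow> nat \<Rightarrow> real" where
  "BB n k = (SOME b. 0 \<le> b \<and> (\<forall>x. \<bar>x\<bar> \<le> real n \<longrightarrow> \<bar>(deriv ^^ k) (chi n) x\<bar> \<le> b))"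

lemma BB: "0 \<le> BB n k" "\<bar>x\<bar> \<le> real n \<Longrightarrow> \<bar>(deriv ^^ k) (chi n) x\<bar> \<le> BB n k"
  using someI_ex[OF chi_bound_ex[of n k]] unfolding BB_def by blast+

definition TT :: "nat \<Rightarrow> real" where "TT n = (\<Sum>j\<le>n. \<Sum>k\<le>n. BB j k)"

lemma TT_nonneg: "0 \<le> TT n"
  unfolding TT_def by (intro sum_nonneg) (auto simp: BB)

lemma BB_le_TT: "k \<le> n \<Longrightarrow> BB n k \<le> TT n"
proof -
  assume kn: "k \<le> n"
  have "BB n k \<le> (\<Sum>k\<le>n. BB n k)" using kn by (intro member_le_sum) (auto simp: BB)
  also have "\<dots> \<le> (\<Sum>j\<le>n. \<Sum>k\<le>n. BB j k)"
    by (rule member_le_sum[where f = "\<lambda>j. \<Sum>k\<le>n. BB j k"]) (auto intro!: sum_nonneg simp: BB)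
  finally show ?thesis by (simp add: TT_def)
qed

lemma TT_mono: "m \<le> n \<Longrightarrow> TT m \<le> TT n"
proof -
  assume mn: "m \<le> n"
  have "TT m \<le> (\<Sum>j\<le>m. \<Sum>k\<le>n. BB j k)"
    unfolding TT_def using mn by (intro sum_mono sum_mono2) (auto simp: BB)
  also have "\<dots> \<le> TT n"
    unfolding TT_def using mn by (intro sum_mono2) (auto intro!: sum_nonneg simp: BB)
  finally show ?thesis .
qed

definition ee :: "nat \<Rightarrow> real" where "ee m = (1/4) ^ m / (1 + TT (m div 2))"

lemma ee_pos: "0 < ee m"
  using TT_nonneg[of "m div 2"] by (simp add: ee_def)

lemma ee_dec: "ee (Suc m) \<le> ee m / 4"
proof -
  have t: "TT (m div 2) \<le> TT (Suc m div 2)" by (rule TT_mono) (simp add: div_le_mono)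
  have p: "0 < 1 + TT (m div 2)" using TT_nonneg[of "m div 2"] by simp
  have "ee (Suc m) = (1/4) ^ m / 4 / (1 + TT (Suc m div 2))" by (simp add: ee_def)
  also have "\<dots> \<le> (1/4) ^ m / 4 / (1 + TT (m div 2))"
    using t p by (intro divide_left_mono) auto
  also have "\<dots> = ee m / 4" by (simp add: ee_def)
  finally show ?thesis .
qed

lemma ee_bound:
  assumes "m div 2 = n"
  shows "ee m \<le> (1/2) ^ n / (1 + TT n)"
proof -
  have "(1/4::real) ^ m \<le> (1/4) ^ (2 * n)" using assms by (intro power_decreasing) auto
  also have "(1/4::real) ^ (2 * n) = (1/16) ^ n" by (simp add: power_mult power2_eq_square)
  also have "(1/16::real) ^ n \<le> (1/2) ^ n" by (rule power_mono) auto
  finally have "(1/4::real) ^ m \<le> (1/2) ^ n" .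
  then show ?thesis unfolding ee_def assms using TT_nonneg[of n]
    by (intro divide_right_mono) auto
qed

lemma wbound:
  assumes "0 \<le> w" "w \<le> (1/2) ^ n / (1 + T)" "\<bar>D\<bar> \<le> T"
  shows "\<bar>w * D\<bar> \<le> (1/2::real) ^ n"
proof -
  have T0: "0 \<le> T" using assms(3) by linarith
  have "\<bar>w * D\<bar> = w * \<bar>D\<bar>" using assms(1) by (simp add: abs_mult)
  also have "\<dots> \<le> (1/2) ^ n / (1 + T) * T" using assms T0 by (intro mult_mono) auto
  also have "\<dots> \<le> (1/2) ^ n / (1 + T) * (1 + T)" using T0 by (intro mult_left_mono) auto
  also have "\<dots> = (1/2) ^ n" using T0 by simp
  finally show ?thesis .
qed

lemma series_chi_smooth:
  assumes w0: "\<And>n. 0 \<le> w n" and wb: "\<And>n. w n \<le> (1/2) ^ n / (1 + TT n)"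
  shows "smooth1 (\<lambda>x. \<Sum>n. w n * chi n x)"
proof (rule series_smooth[OF chi_smooth])
  fix k and R :: real
  show "\<exists>N. \<forall>n\<ge>N. \<forall>x. \<bar>x\<bar> \<le> R \<longrightarrow> \<bar>w n * (deriv ^^ k) (chi n) x\<bar> \<le> (1/2) ^ n"
  proof (intro exI[of _ "max k (nat \<lceil>R\<rceil>)"] allI impI)
    fix n x assume n: "max k (nat \<lceil>R\<rceil>) \<le> n" and x: "\<bar>x\<bar> \<le> R"
    have "\<bar>x\<bar> \<le> real n" using n x by linarith
    then have "\<bar>(deriv ^^ k) (chi n) x\<bar> \<le> TT n"
      using BB(2)[of x n k] BB_le_TT[of k n] n by auto
    then show "\<bar>w n * (deriv ^^ k) (chi n) x\<bar> \<le> (1/2) ^ n"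
      by (rule wbound[OF w0 wb])
  qed
qed

definition FF :: "real \<Rightarrow> real" where "FF x = (\<Sum>n. ee (2 * n) * chi n x)"
definition GG :: "real \<Rightarrow> real" where "GG x = (\<Sum>n. ee (2 * n + 1) * chi n x)"

lemma FF_smooth: "smooth1 FF"
proof -
  have "smooth1 (\<lambda>x. \<Sum>n. ee (2 * n) * chi n x)"
    by (rule series_chi_smooth) (auto intro: less_imp_le ee_pos ee_bound)
  then show ?thesis by (simp add: FF_def[abs_def])
qed

lemma GG_smooth: "smooth1 GG"
proof -
  have "smooth1 (\<lambda>x. \<Sum>n. ee (2 * n + 1) * chi n x)"
    by (rule series_chi_smooth) (auto intro: less_imp_le ee_pos ee_bound)
  then show ?thesis by (simp add: GG_def[abs_def])
qed


lemma chi_good: "good x \<Longrightarrow> chi n x = real_of_int (dig n x)"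
  using good_digit[of x n] by auto

lemma chi01: "good x \<Longrightarrow> chi n x \<in> {0, 1}"
  using good_digit[of x n] by auto

lemma ee_summable: "summable ee"
proof (rule summable_comparison_test[where g = "\<lambda>m. (1/4) ^ m"])
  show "\<exists>N. \<forall>n\<ge>N. norm (ee n) \<le> (1/4) ^ n"
  proof (intro exI[of _ 0] allI impI)
    fix n :: nat
    have "ee n \<le> (1/4) ^ n / 1" unfolding ee_def using TT_nonneg[of "n div 2"]
      by (intro divide_left_mono) auto
    then show "norm (ee n) \<le> (1/4) ^ n" using ee_pos[of n] by simp
  qed
qed (simp add: summable_geometric)

lemma sum_pair:
  fixes f :: "nat \<Rightarrow> 'a::comm_monoid_add" and n :: nat
  shows "sum f {n * 2..<n * 2 + 2} = f (2 * n) + f (2 * n + 1)"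
proof -
  have "{n * 2..<n * 2 + 2} = {2 * n, 2 * n + 1}" by auto
  then show ?thesis by simp
qed

lemma ee_le: "ee m \<le> (1/4) ^ m"
proof -
  have "ee m \<le> (1/4) ^ m / 1" unfolding ee_def using TT_nonneg[of "m div 2"]
    by (intro divide_left_mono) auto
  then show ?thesis by simp
qed

lemma ee_sub_summable:
  assumes f: "\<And>n. n \<le> f n" and b: "\<And>n. b n \<in> {0::real, 1}"
  shows "summable (\<lambda>n. ee (f n) * b n)"
proof (rule summable_comparison_test[where g = "\<lambda>n. (1/4) ^ n"])
  show "\<exists>N. \<forall>n\<ge>N. norm (ee (f n) * b n) \<le> (1/4) ^ n"
  proof (intro exI[of _ 0] allI impI)
    fix n :: nat
    have "\<bar>ee (f n) * b n\<bar> \<le> ee (f n)" using b[of n] ee_pos[of "f n"] by auto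
    also have "\<dots> \<le> (1/4) ^ f n" by (rule ee_le)
    also have "\<dots> \<le> (1/4) ^ n" using f[of n] by (intro power_decreasing) auto
    finally show "norm (ee (f n) * b n) \<le> (1/4) ^ n" by simp
  qed
qed (simp add: summable_geometric)

lemma FG_interleave:
  assumes gx: "good x" and gy: "good y"
  shows "FF x + GG y = (\<Sum>m. ee m * (if even m then chi (m div 2) x else chi (m div 2) y))"
proof -
  define c where "c m = (if even m then chi (m div 2) x else chi (m div 2) y)" for m
  have cm: "c m \<in> {0,1}" for m using chi01[OF gx] chi01[OF gy] by (auto simp: c_def)
  have "(\<lambda>m. ee m * c m) sums (\<Sum>m. ee m * c m)"
    using ee_sub_summable[of "\<lambda>n. n" c] cm by (simp add: summable_sums)
  from sums_group[OF this, of 2]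
  have "(\<lambda>n. ee (2 * n) * chi n x + ee (2 * n + 1) * chi n y) sums (\<Sum>m. ee m * c m)"
    by (simp add: sum_pair c_def mult.commute)
  moreover have "FF x + GG y = (\<Sum>n. ee (2 * n) * chi n x + ee (2 * n + 1) * chi n y)"
    unfolding FF_def GG_def
    by (rule suminf_add; rule ee_sub_summable) (use chi01[OF gx] chi01[OF gy] in auto)
  ultimately show ?thesis by (simp add: sums_iff c_def)
qed

lemma FG_inj:
  assumes gx: "good x" and gy: "good y" and gx': "good x'" and gy': "good y'"
    and eq: "FF x + GG y = FF x' + GG y'"
  shows "x = x' \<and> y = y'"
proof -
  define c where "c m = (if even m then chi (m div 2) x else chi (m div 2) y)" for m
  define c' where "c' m = (if even m then chi (m div 2) x' else chi (m div 2) y')" for m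
  have eqs: "(\<Sum>m. ee m * c m) = (\<Sum>m. ee m * c' m)"
    using eq FG_interleave[OF gx gy] FG_interleave[OF gx' gy'] by (simp add: c_def c'_def)
  have cc: "c = c'"
    by (rule superdec[where e = ee, OF ee_pos ee_dec _ _ eqs])
       (use ee_pos ee_dec chi01[OF gx] chi01[OF gy] chi01[OF gx'] chi01[OF gy'] in \<open>auto simp: c_def c'_def\<close>)
  have "chi n x = chi n x'" for n using fun_cong[OF cc, of "2 * n"] by (simp add: c_def c'_def)
  then have "dig n x = dig n x'" for n using chi_good[OF gx] chi_good[OF gx'] by (metis of_int_eq_iff)
  then have 1: "x = x'" by (rule good_inj[OF gx gx'])
  have "chi n y = chi n y'" for n using fun_cong[OF cc, of "2 * n + 1"] by (simp add: c_def c'_def)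
  then have "dig n y = dig n y'" for n using chi_good[OF gy] chi_good[OF gy'] by (metis of_int_eq_iff)
  then have 2: "y = y'" by (rule good_inj[OF gy gy'])
  show ?thesis using 1 2 by simp
qed


lemma comp_nth_deriv:
  fixes h :: "real \<Rightarrow> real" and x :: "real^'n"
  assumes "h field_differentiable at (x$i)"
  shows "((\<lambda>z::real^'n. h (z$i) * p) has_derivative (\<lambda>v. v$i * deriv h (x$i) * p)) (at x)"
proof -
  have d: "DERIV h (x$i) :> deriv h (x$i)" using assms DERIV_deriv_iff_field_differentiable by blast
  have n: "((\<lambda>z::real^'n. z$i) has_derivative (\<lambda>v. v$i)) (at x)"
    by (rule bounded_linear.has_derivative[OF bounded_linear_vec_nth has_derivative_ident])
  have "((\<lambda>z. h (z$i)) has_derivative (\<lambda>v. v$i * deriv h (x$i))) (at x)"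
    by (rule DERIV_compose_FDERIV[OF d n])
  then show ?thesis by (rule has_derivative_mult_left)
qed

lemma iter_deriv_sep:
  fixes f g :: "real \<Rightarrow> real"
  assumes f: "smooth1 f" and g: "smooth1 g"
  shows "iter_deriv (\<lambda>z::real^2. f (z$1) + g (z$2)) vs =
    (\<lambda>z. (deriv ^^ length vs) f (z$1) * prod_list (map (\<lambda>v. v$1) vs)
       + (deriv ^^ length vs) g (z$2) * prod_list (map (\<lambda>v. v$2) vs))"
proof (induction vs)
  case Nil
  show ?case by simp
next
  case (Cons v vs)
  define k where "k = length vs"
  define p where "p = prod_list (map (\<lambda>v::real^2. v$1) vs)"
  define q where "q = prod_list (map (\<lambda>v::real^2. v$2) vs)"
  have IH: "iter_deriv (\<lambda>z::real^2. f (z$1) + g (z$2)) vs =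
     (\<lambda>z. (deriv ^^ k) f (z$1) * p + (deriv ^^ k) g (z$2) * q)"
    using Cons.IH by (simp add: k_def p_def q_def)
  have sf: "(deriv ^^ Suc k) f = deriv ((deriv ^^ k) f)" and sg: "(deriv ^^ Suc k) g = deriv ((deriv ^^ k) g)"
    by (simp_all only: funpow.simps o_apply)
  show ?case
  proof
    fix x :: "real^2"
    have hd: "((\<lambda>z::real^2. (deriv ^^ k) f (z$1) * p + (deriv ^^ k) g (z$2) * q) has_derivative
      (\<lambda>w. w$1 * deriv ((deriv ^^ k) f) (x$1) * p + w$2 * deriv ((deriv ^^ k) g) (x$2) * q)) (at x)"
      by (intro has_derivative_add comp_nth_deriv smooth1_diff f g)
    have "iter_deriv (\<lambda>z::real^2. f (z$1) + g (z$2)) (v # vs) x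
        = frechet_derivative (\<lambda>z::real^2. (deriv ^^ k) f (z$1) * p + (deriv ^^ k) g (z$2) * q) (at x) v"
      by (simp only: iter_deriv.simps IH)
    also have "\<dots> = v$1 * deriv ((deriv ^^ k) f) (x$1) * p + v$2 * deriv ((deriv ^^ k) g) (x$2) * q"
      by (simp only: frechet_derivative_at[OF hd, symmetric])
    also have "\<dots> = (deriv ^^ Suc k) f (x$1) * (v$1 * p) + (deriv ^^ Suc k) g (x$2) * (v$2 * q)"
      by (simp only: sf sg mult_ac)
    moreover have "length (v # vs) = Suc k" by (simp add: k_def)
    moreover have "prod_list (map (\<lambda>v::real^2. v$1) (v # vs)) = v$1 * p" by (simp add: p_def)
    moreover have "prod_list (map (\<lambda>v::real^2. v$2) (v # vs)) = v$2 * q" by (simp add: q_def)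
    ultimately show "iter_deriv (\<lambda>z::real^2. f (z$1) + g (z$2)) (v # vs) x =
      (deriv ^^ length (v # vs)) f (x$1) * prod_list (map (\<lambda>v. v$1) (v # vs))
       + (deriv ^^ length (v # vs)) g (x$2) * prod_list (map (\<lambda>v. v$2) (v # vs))"
      by (simp only:)
  qed
qed

lemma smooth_sep:
  fixes f g :: "real \<Rightarrow> real"
  assumes f: "smooth1 f" and g: "smooth1 g"
  shows "smooth (\<lambda>z::real^2. f (z$1) + g (z$2))"
  unfolding smooth_def
proof (intro allI)
  fix vs :: "(real^2) list" and x :: "real^2"
  define k where "k = length vs"
  define p where "p = prod_list (map (\<lambda>v::real^2. v$1) vs)"
  define q where "q = prod_list (map (\<lambda>v::real^2. v$2) vs)"
  have "((\<lambda>z::real^2. (deriv ^^ k) f (z$1) * p + (deriv ^^ k) g (z$2) * q) has_derivative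
      (\<lambda>w. w$1 * deriv ((deriv ^^ k) f) (x$1) * p + w$2 * deriv ((deriv ^^ k) g) (x$2) * q)) (at x)"
    by (intro has_derivative_add comp_nth_deriv smooth1_diff f g)
  then show "iter_deriv (\<lambda>z::real^2. f (z$1) + g (z$2)) vs differentiable (at x)"
    unfolding iter_deriv_sep[OF f g] k_def[symmetric] p_def[symmetric] q_def[symmetric] by (rule differentiableI)
qed


definition lo :: "nat \<Rightarrow> nat \<Rightarrow> 2 \<Rightarrow> real^2" where
  "lo n k i = (\<chi> j. if j = i then real k / 2 ^ (n + 1) - rr n / 2 ^ n else -1)"
definition hi :: "nat \<Rightarrow> nat \<Rightarrow> 2 \<Rightarrow> real^2" where
  "hi n k i = (\<chi> j. if j = i then real k / 2 ^ (n + 1) + rr n / 2 ^ n else 2)"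
definition strip :: "nat \<Rightarrow> nat \<Rightarrow> 2 \<Rightarrow> (real^2) set" where
  "strip n k i = box (lo n k i) (hi n k i)"
definition UU :: "nat \<Rightarrow> (real^2) set" where
  "UU n = (\<Union>k\<in>{..2 ^ (n + 1)}. \<Union>i\<in>UNIV. strip n k i)"

lemma strip_lmeasurable: "strip n k i \<in> lmeasurable"
  unfolding strip_def by (intro lmeasurable_open bounded_box open_box)

lemma strip_measure: "measure lebesgue (strip n k i) \<le> 6 * (rr n / 2 ^ n)"
proof -
  have le: "lo n k i $ j \<le> hi n k i $ j" for j
    using rr_pos[of n] by (auto simp: lo_def hi_def)
  have ne: "cbox (lo n k i) (hi n k i) \<noteq> {}"
  proof -
    have "lo n k i \<in> cbox (lo n k i) (hi n k i)" using le by (simp add: mem_box_cart)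
    then show ?thesis by blast
  qed
  have "measure lebesgue (strip n k i) \<le> measure lebesgue (cbox (lo n k i) (hi n k i))"
    unfolding strip_def
    by (rule measure_mono_fmeasurable[OF box_subset_cbox])
       (use strip_lmeasurable[of n k i] in \<open>auto simp: strip_def dest: fmeasurableD\<close>)
  also have "\<dots> = measure lborel (cbox (lo n k i) (hi n k i))" by simp
  also have "\<dots> = (\<Prod>j\<in>UNIV. hi n k i $ j - lo n k i $ j)" by (rule content_cbox_cart[OF ne])
  also have "\<dots> = (hi n k i $ 1 - lo n k i $ 1) * (hi n k i $ 2 - lo n k i $ 2)"
    by (simp add: UNIV_2)
  also have "\<dots> = 6 * (rr n / 2 ^ n)"
    using exhaust_2[of i] by (auto simp: lo_def hi_def)
  finally show ?thesis .
qed

lemma UU_lmeasurable: "UU n \<in> lmeasurable"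
  unfolding UU_def strip_def
  by (intro lmeasurable_open bounded_UN open_UN ballI bounded_box open_box finite_atMost finite) 

lemma UU_measure: "measure lebesgue (UU n) \<le> 48 * rr n"
proof -
  have "measure lebesgue (UU n) \<le> (\<Sum>k\<in>{..2 ^ (n + 1)}. measure lebesgue (\<Union>i\<in>UNIV. strip n k i))"
    unfolding UU_def
    by (rule measure_UNION_le) (auto intro!: fmeasurableD lmeasurable_open bounded_UN open_UN simp: strip_def)
  also have "\<dots> \<le> (\<Sum>k\<in>{..(2::nat) ^ (n + 1)}. \<Sum>i\<in>(UNIV::2 set). 6 * (rr n / 2 ^ n))"
  proof (rule sum_mono)
    fix k
    have "measure lebesgue (\<Union>i\<in>UNIV. strip n k i) \<le> (\<Sum>i\<in>UNIV. measure lebesgue (strip n k i))"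
      by (rule measure_UNION_le) (auto intro: fmeasurableD strip_lmeasurable)
    also have "\<dots> \<le> (\<Sum>i\<in>(UNIV::2 set). 6 * (rr n / 2 ^ n))"
      by (rule sum_mono) (rule strip_measure)
    finally show "measure lebesgue (\<Union>i\<in>UNIV. strip n k i) \<le> (\<Sum>i\<in>(UNIV::2 set). 6 * (rr n / 2 ^ n))" .
  qed
  also have "\<dots> = (2 ^ (n + 1) + 1) * 12 * (rr n / 2 ^ n)"
    by (simp add: UNIV_2)
  also have "\<dots> \<le> (4 * 2 ^ n) * 12 * (rr n / 2 ^ n)"
  proof -
    have "(1::real) \<le> 2 ^ n" by simp
    moreover have "(2::real) ^ (n + 1) = 2 * 2 ^ n" by simp
    ultimately have "(2::real) ^ (n + 1) + 1 \<le> 4 * 2 ^ n" by linarith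
    then show ?thesis using rr_pos[of n] by (intro mult_right_mono) auto
  qed
  also have "\<dots> = 48 * rr n" by simp
  finally show ?thesis .
qed


definition A0 :: "(real^2) set" where
  "A0 = cbox 0 (\<chi> j. 1) - (\<Union>n. UU n)"

lemma U_measure: "(\<Union>n. UU n) \<in> lmeasurable \<and> measure lebesgue (\<Union>n. UU n) \<le> 3 / 4"
proof -
  have sm: "summable (\<lambda>n. 48 * rr n)"
    unfolding rr_def by (intro summable_mult summable_ignore_initial_segment summable_geometric) simp
  have sv: "(\<Sum>n. 48 * rr n) = 3 / 4"
  proof -
    have "(\<Sum>n. 48 * rr n) = (\<Sum>n. (48 / 128) * (1/2::real) ^ n)"
      by (rule suminf_cong) (simp add: rr_def power_add power_divide)
    also have "\<dots> = (48 / 128) * (\<Sum>n. (1/2::real) ^ n)"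
      by (rule suminf_mult) (rule summable_geometric, simp)
    also have "\<dots> = 3 / 4" by (simp add: suminf_geometric)
    finally show ?thesis .
  qed
  have bnd: "measure lebesgue (\<Union>i\<in>I'. UU i) \<le> 3 / 4" if "I' \<subseteq> UNIV" "finite I'" for I'
  proof -
    have "measure lebesgue (\<Union>i\<in>I'. UU i) \<le> (\<Sum>i\<in>I'. measure lebesgue (UU i))"
      by (rule measure_UNION_le[OF that(2)]) (auto intro: fmeasurableD UU_lmeasurable)
    also have "\<dots> \<le> (\<Sum>i\<in>I'. 48 * rr i)" by (rule sum_mono) (rule UU_measure)
    also have "\<dots> \<le> (\<Sum>n. 48 * rr n)"
      by (rule sum_le_suminf[OF sm that(2)]) (simp add: rr_def)
    finally show ?thesis using sv by simp
  qed
  have "(\<Union>i\<in>UNIV. UU i) \<in> lmeasurable"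
    by (rule fmeasurable_UN_bound[OF countableI_type UU_lmeasurable bnd])
  moreover have "measure lebesgue (\<Union>i\<in>UNIV. UU i) \<le> 3 / 4"
    by (rule measure_UN_bound[OF countableI_type UU_lmeasurable bnd])
  ultimately show ?thesis by simp
qed

lemma open_U: "open (\<Union>n. UU n)"
  unfolding UU_def strip_def by (intro open_UN ballI open_box)

lemma A0_compact: "compact A0"
proof -
  have "closed A0" unfolding A0_def by (intro closed_Diff closed_cbox open_U)
  moreover have "bounded A0" unfolding A0_def by (rule bounded_subset[OF bounded_cbox]) auto
  ultimately show ?thesis by (simp add: compact_eq_bounded_closed)
qed

lemma A0_measure: "1 / 4 \<le> measure lebesgue A0"
proof -
  have c1: "measure lebesgue (cbox (0::real^2) (\<chi> j. 1)) = 1"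
  proof -
    have ne: "cbox (0::real^2) (\<chi> j. 1) \<noteq> {}"
    proof -
      have "(0::real^2) \<in> cbox 0 (\<chi> j. 1)" by (simp add: mem_box_cart)
      then show ?thesis by blast
    qed
    have "measure lebesgue (cbox (0::real^2) (\<chi> j. 1)) = measure lborel (cbox (0::real^2) (\<chi> j. 1))" by simp
    also have "\<dots> = 1" using content_cbox_cart[OF ne] by simp
    finally show ?thesis .
  qed
  have "measure lebesgue (cbox (0::real^2) (\<chi> j. 1)) - measure lebesgue (\<Union>n. UU n) \<le> measure lebesgue A0"
    unfolding A0_def using U_measure by (intro measure_diff_le_measure_setdiff) auto
  then show ?thesis using c1 U_measure by linarith
qed

lemma A0_good:
  assumes z: "z \<in> A0"
  shows "good (z $ i)"
proof -
  have zc: "\<And>j. 0 \<le> z $ j \<and> z $ j \<le> 1" using z by (auto simp: A0_def mem_box_cart)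
  have zc2: "-1 < z $ j" "z $ j < 2" for j using zc[of j] by linarith+
  have nz: "z \<notin> UU n" for n using z by (auto simp: A0_def)
  show ?thesis unfolding good_def
  proof (intro conjI allI impI)
    show "0 \<le> z $ i" "z $ i \<le> 1" using zc by auto
    fix n and k :: int
    assume k: "0 \<le> k \<and> real_of_int k \<le> 2 ^ (n + 1)"
    show "rr n / 2 ^ n \<le> \<bar>z $ i - real_of_int k / 2 ^ (n + 1)\<bar>"
    proof (rule ccontr)
      assume "\<not> ?thesis"
      then have cl: "\<bar>z $ i - real_of_int k / 2 ^ (n + 1)\<bar> < rr n / 2 ^ n" by simp
      have rk: "real (nat k) = real_of_int k" using k by simp
      have "nat k \<le> 2 ^ (n + 1)"
      proof -
        have "k \<le> 2 ^ (n + 1)" using k by (metis of_int_le_iff of_int_numeral of_int_power)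
        then show ?thesis by (simp add: nat_le_iff)
      qed
      moreover have "z \<in> strip n (nat k) i"
        unfolding strip_def mem_box_cart lo_def hi_def
        using cl zc rk by (auto simp: abs_less_iff zc2)
      ultimately have "z \<in> UU n" unfolding UU_def by blast
      then show False using nz by blast
    qed
  qed
qed


lemma smooth1_scale: "smooth1 f \<Longrightarrow> smooth1 (\<lambda>x. f (x / c))"
proof -
  assume f: "smooth1 f"
  have "Ck k (\<lambda>x. f ((1 / c) * x + 0))" for k
    by (rule Ck_comp[OF smooth1_Ck[OF f] Ck_lin])
  then have "smooth1 (\<lambda>x. f ((1 / c) * x + 0))" unfolding smooth1_def by blast
  then show ?thesis by simp
qed

theorem theorem3:
  shows "\<exists>(A :: (real^2) set) (\<kappa> :: real^2 \<Rightarrow> real).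
           compact A \<and> measure lebesgue A = 1/4 \<and> smooth \<kappa> \<and> inj_on \<kappa> A"
proof -
  define m where "m = measure lebesgue A0"
  have m0: "0 < m" using A0_measure unfolding m_def by linarith
  define c where "c = 1 / (2 * sqrt m)"
  have c0: "0 < c" using m0 by (simp add: c_def)
  define A where "A = (\<lambda>z. c *\<^sub>R z) ` A0"
  define \<kappa> where "\<kappa> z = FF (z $ 1 / c) + GG (z $ 2 / c)" for z :: "real^2"
  have "compact A" unfolding A_def by (rule compact_scaling[OF A0_compact])
  moreover have "measure lebesgue A = 1 / 4"
  proof -
    have "measure lebesgue ((\<lambda>x. c *\<^sub>R x + 0) ` A0) = \<bar>c\<bar> ^ DIM(real^2) * measure lebesgue A0"
      by (rule measure_lebesgue_affine)
    then have "measure lebesgue A = c ^ 2 * m" using c0 by (simp add: A_def m_def)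
    also have "c ^ 2 = 1 / (4 * m)" using m0 by (simp add: c_def power_divide power_mult_distrib)
    finally show ?thesis using m0 by simp
  qed
  moreover have "smooth \<kappa>"
  proof -
    have "smooth (\<lambda>z::real^2. (\<lambda>x. FF (x / c)) (z $ 1) + (\<lambda>x. GG (x / c)) (z $ 2))"
      by (rule smooth_sep) (intro smooth1_scale FF_smooth GG_smooth)+
    then show ?thesis by (simp add: \<kappa>_def[abs_def])
  qed
  moreover have "inj_on \<kappa> A"
  proof (rule inj_onI)
    fix z w assume z: "z \<in> A" and w: "w \<in> A" and e: "\<kappa> z = \<kappa> w"
    obtain z0 where z0: "z0 \<in> A0" "z = c *\<^sub>R z0" using z unfolding A_def by blast
    obtain w0 where w0: "w0 \<in> A0" "w = c *\<^sub>R w0" using w unfolding A_def by blast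
    have "FF (z0 $ 1) + GG (z0 $ 2) = FF (w0 $ 1) + GG (w0 $ 2)"
      using e z0(2) w0(2) c0 by (simp add: \<kappa>_def)
    then have "z0 $ 1 = w0 $ 1 \<and> z0 $ 2 = w0 $ 2"
      by (rule FG_inj[OF A0_good[OF z0(1)] A0_good[OF z0(1)] A0_good[OF w0(1)] A0_good[OF w0(1)]])
    then have "z0 = w0" by (simp add: vec_eq_iff forall_2)
    then show "z = w" using z0(2) w0(2) by simp
  qed
  ultimately show ?thesis by blast
qed

end
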